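(* Let $J_1,\dots,J_7$ be pairwise anticommuting orthogonal complex structures on $\mathfrak a=\mathbb R^8$ and $V=\mathrm{Span}(J_1,\dots,J_5,J_6,J_6J_7)$, with an inner product whose restriction to $\mathrm{Span}(J_1,\dots,J_5)$ is standard, with $\mathrm{Span}(J_6,J_6J_7)\perp\mathrm{Span}(J_1,\dots,J_5)$, and whose restriction to $\mathrm{Span}(J_6,J_6J_7)$ is arbitrary. Then $(V,\langle\cdot,\cdot\rangle)$ is a WS-pair, while $V$ is not non-singular.
   Context: Orthogonal complex structures on $\mathbb R^8$ are orthogonal matrices $J$ with $J^2=-I_8$. An inner product on $V\subset\mathfrak{so}(8)$ is standard if it is a positive multiple of $(J,K)\mapsto-\mathrm{Tr}(JK)$. $V$ is non-singular if every nonzero element of $V$ is invertible. For a Euclidean space $\mathfrak a$, a subspace $V\subset\mathfrak{so}(\mathfrak a)$ with inner product $\langle\cdot,\cdot\rangle$ defines the metric 2-step nilpotent Lie algebra $\mathfrak n=V\oplus\mathfrak a$ (orthogonal sum, $V$ central, $\langle J,[X,Y]\rangle=\langle JX,Y\rangle$); it is a WS-pair if the corresponding simply connected nilpotent Lie group with left-invariant metric is weakly symmetric. Standing fact: this holds iff for every $J\in V$, $X\in\mathfrak a$ there is $N\in\mathcal N(V)=\{N\in O(\mathfrak a): NVN^{-1}\subset V$, $K\mapsto NKN^{-1}$ orthogonal on $(V,\langle\cdot,\cdot\rangle)\}$ with $NX=-X$, $NJ=-JN$. *)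

theory Defs
  imports "HOL-Analysis.Analysis"
begin

type_synonym mat8 = "real^8^8"

definition ocs :: "mat8 \<Rightarrow> bool" where
  "ocs J \<longleftrightarrow> orthogonal_matrix J \<and> J ** J = - mat 1"

definition inner_product_on :: "mat8 set \<Rightarrow> (mat8 \<Rightarrow> mat8 \<Rightarrow> real) \<Rightarrow> bool" where
  "inner_product_on V ip \<longleftrightarrow>
     (\<forall>x\<in>V. \<forall>y\<in>V. ip x y = ip y x) \<and>
     (\<forall>x\<in>V. \<forall>y\<in>V. \<forall>z\<in>V. \<forall>a b. ip (a *\<^sub>R x + b *\<^sub>R y) z = a * ip x z + b * ip y z) \<and>
     (\<forall>x\<in>V. x \<noteq> 0 \<longrightarrow> ip x x > 0)"

definition standard_on :: "mat8 set \<Rightarrow> (mat8 \<Rightarrow> mat8 \<Rightarrow> real) \<Rightarrow> bool" where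
  "standard_on W ip \<longleftrightarrow> (\<exists>c>0. \<forall>J\<in>W. \<forall>K\<in>W. ip J K = c * (- trace (J ** K)))"

definition normalizer :: "mat8 set \<Rightarrow> (mat8 \<Rightarrow> mat8 \<Rightarrow> real) \<Rightarrow> mat8 set" where
  "normalizer V ip = {N. orthogonal_matrix N \<and>
      (\<forall>K\<in>V. N ** K ** matrix_inv N \<in> V) \<and>
      (\<forall>K\<in>V. \<forall>L\<in>V. ip (N ** K ** matrix_inv N) (N ** L ** matrix_inv N) = ip K L)}"

text \<open>WS-pair, via the standing characterization.\<close>
definition WS_pair :: "mat8 set \<Rightarrow> (mat8 \<Rightarrow> mat8 \<Rightarrow> real) \<Rightarrow> bool" where
  "WS_pair V ip \<longleftrightarrow> (\<forall>J\<in>V. \<forall>X::real^8. \<exists>N\<in>normalizer V ip.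
      N *v X = - X \<and> N ** J = - (J ** N))"

definition nonsingular :: "mat8 set \<Rightarrow> bool" where
  "nonsingular V \<longleftrightarrow> (\<forall>K\<in>V. K \<noteq> 0 \<longrightarrow> invertible K)"

end

theory Submission
  imports Defs
begin


lemma mm_ladd: "((A::real^'n^'m) + B) ** C = A ** C + B ** C"
  by (simp add: matrix_matrix_mult_def vec_eq_iff algebra_simps sum.distrib)
lemma mm_lscale: "(c *\<^sub>R (A::real^'n^'m)) ** B = c *\<^sub>R (A ** B)"
  by (simp add: matrix_matrix_mult_def vec_eq_iff sum_distrib_left algebra_simps)
lemma mm_rscale: "(A::real^'n^'m) ** (c *\<^sub>R B) = c *\<^sub>R (A ** B)"
  by (simp add: matrix_matrix_mult_def vec_eq_iff sum_distrib_left algebra_simps)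
lemma mm_lneg: "(- (A::real^'n^'m)) ** B = - (A ** B)"
  by (simp add: matrix_matrix_mult_def vec_eq_iff sum_negf)
lemma mm_rneg: "(A::real^'n^'m) ** (- B) = - (A ** B)"
  by (simp add: matrix_matrix_mult_def vec_eq_iff sum_negf)
lemma mm_lsub: "((A::real^'n^'m) - B) ** C = A ** C - B ** C"
  by (simp add: matrix_matrix_mult_def vec_eq_iff algebra_simps sum_subtractf)
lemma mm_rsub: "(A::real^'n^'m) ** (B - C) = A ** B - A ** C"
  by (simp add: matrix_matrix_mult_def vec_eq_iff algebra_simps sum_subtractf)
lemma mm_lsum: "finite S \<Longrightarrow> (\<Sum>i\<in>S. f i) ** (B::real^'n^'m) = (\<Sum>i\<in>S. f i ** B)"
  by (induction S rule: finite_induct) (simp_all add: mm_ladd)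
lemma mm_rsum: "finite S \<Longrightarrow> (B::real^'n^'m) ** (\<Sum>i\<in>S. f i) = (\<Sum>i\<in>S. B ** f i)"
  by (induction S rule: finite_induct) (simp_all add: matrix_add_ldistrib)
lemma tr_add: "transpose ((A::real^'n^'m) + B) = transpose A + transpose B"
  by (simp add: transpose_def vec_eq_iff)
lemma tr_neg: "transpose (- (A::real^'n^'m)) = - transpose A"
  by (simp add: transpose_def vec_eq_iff)
lemma tr_sum: "finite S \<Longrightarrow> transpose (\<Sum>i\<in>S. (f i::real^'n^'m)) = (\<Sum>i\<in>S. transpose (f i))"
  by (induction S rule: finite_induct) (simp_all add: tr_add transpose_def vec_eq_iff)
lemma mv_lsum: "finite S \<Longrightarrow> (\<Sum>i\<in>S. f i) *v (x::real^'n) = (\<Sum>i\<in>S. (f i::real^'n^'m) *v x)"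
  by (induction S rule: finite_induct) (simp_all add: matrix_vector_mult_add_rdistrib)
lemma mv_lscale: "(c *\<^sub>R (A::real^'n^'m)) *v x = c *\<^sub>R (A *v x)"
  by (simp add: scaleR_matrix_vector_assoc)
lemma mv_rsum: "finite S \<Longrightarrow> (A::real^'n^'m) *v (\<Sum>i\<in>S. f i) = (\<Sum>i\<in>S. A *v f i)"
  by (induction S rule: finite_induct) (simp_all add: matrix_vector_right_distrib)
lemma mv_neg: "(- (A::real^'n^'m)) *v x = - (A *v x)"
  by (simp add: matrix_vector_mult_def vec_eq_iff sum_negf)
lemma mv_rneg: "(A::real^'n^'m) *v (- x) = - (A *v x)"
  by (simp add: matrix_vector_mult_def vec_eq_iff sum_negf)
lemma inner_mv: "((A::real^'n^'m) *v x) \<bullet> y = x \<bullet> (transpose A *v y)"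
  by (metis dot_lmul_matrix transpose_matrix_vector transpose_transpose)
lemma trace_scale: "trace (c *\<^sub>R (A::real^'n^'n)) = c * trace A"
  by (simp add: trace_def sum_distrib_left)

lemma exhaust_5:
  fixes x :: 5
  shows "x = 1 \<or> x = 2 \<or> x = 3 \<or> x = 4 \<or> x = 5"
proof (induct x)
  case (of_int z)
  then have "z = 0 \<or> z = 1 \<or> z = 2 \<or> z = 3 \<or> z = 4" by fastforce
  then show ?case by auto
qed
lemma UNIV_5: "(UNIV::5 set) = {1,2,3,4,5}" using exhaust_5 by auto
lemma distinct5: "distinct [1,2,3,4,5::5]" by simp
lemma sum_5: "sum f (UNIV::5 set) = f 1 + f 2 + f 3 + f 4 + f 5"
  unfolding UNIV_5 by (simp add: ac_simps)


definition idx :: "5 \<Rightarrow> nat" where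
  "idx k = (if k = 1 then 1 else if k = 2 then 2 else if k = 3 then 3 else if k = 4 then 4 else 5)"

lemma idx_simps[simp]: "idx 1 = 1" "idx 2 = 2" "idx 3 = 3" "idx 4 = 4" "idx 5 = 5"
  using distinct5 by (auto simp: idx_def)

lemma idx_range: "idx k \<in> {1..5}"
  using exhaust_5[of k] by auto

lemma idx_inj: "idx k = idx l \<longleftrightarrow> k = l"
  using exhaust_5[of k] exhaust_5[of l] by auto

lemma idx_surj: "i \<in> {1..5} \<Longrightarrow> \<exists>k. i = idx k"
proof -
  assume "i \<in> {1..5}"
  then have "i = 1 \<or> i = 2 \<or> i = 3 \<or> i = 4 \<or> i = 5" by auto
  then show ?thesis by (metis idx_simps)
qed

definition LL :: "(nat \<Rightarrow> mat8) \<Rightarrow> real^5 \<Rightarrow> mat8" where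
  "LL J c = (\<Sum>k\<in>UNIV. (c$k) *\<^sub>R J (idx k))"

lemma LL_expand: "LL J c = c$1 *\<^sub>R J 1 + c$2 *\<^sub>R J 2 + c$3 *\<^sub>R J 3 + c$4 *\<^sub>R J 4 + c$5 *\<^sub>R J 5"
  by (simp add: LL_def sum_5)

lemma LL_add: "LL J (c + d) = LL J c + LL J d"
  by (simp add: LL_def scaleR_add_left sum.distrib)
lemma LL_scale: "LL J (r *\<^sub>R c) = r *\<^sub>R LL J c"
  by (simp add: LL_def scaleR_sum_right)
lemma LL_neg: "LL J (- c) = - LL J c"
  by (simp add: LL_def sum_negf)
lemma LL_diff: "LL J (c - d) = LL J c - LL J d"
  by (simp add: LL_def scaleR_diff_left sum_subtractf)




locale cl7 =
  fixes J :: "nat \<Rightarrow> mat8"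
  assumes sq: "i \<in> {1..7} \<Longrightarrow> J i ** J i = - mat 1"
    and an: "i \<in> {1..7} \<Longrightarrow> j \<in> {1..7} \<Longrightarrow> i \<noteq> j \<Longrightarrow> J i ** J j = - (J j ** J i)"
    and tr: "i \<in> {1..7} \<Longrightarrow> transpose (J i) = - J i"
begin

abbreviation "L \<equiv> LL J"

lemma idx17: "idx k \<in> {1..7}" using idx_range[of k] by auto

lemma anti_sum: "J i ** J j + J j ** J i = (if i = j then (-2) *\<^sub>R mat 1 else 0)"
  if "i \<in> {1..7}" "j \<in> {1..7}" for i j
  using sq[OF that(1)] an[OF that] by (auto simp: scaleR_2)

lemma LL_mult: "L c ** L d = (\<Sum>k\<in>UNIV. \<Sum>l\<in>UNIV. (c$k * d$l) *\<^sub>R (J (idx k) ** J (idx l)))"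
proof -
  have 1: "L c ** L d = (\<Sum>k\<in>UNIV. c$k *\<^sub>R (J (idx k) ** L d))"
    unfolding LL_def[of J c] by (simp add: mm_lsum mm_lscale)
  have 2: "J (idx k) ** L d = (\<Sum>l\<in>UNIV. d$l *\<^sub>R (J (idx k) ** J (idx l)))" for k
    unfolding LL_def[of J d] by (simp add: mm_rsum mm_rscale)
  show ?thesis unfolding 1 2 by (simp add: scaleR_sum_right)
qed

lemma cliff: "L c ** L d + L d ** L c = (-2 * (c \<bullet> d)) *\<^sub>R mat 1"
proof -
  have e2: "L d ** L c = (\<Sum>k\<in>UNIV. \<Sum>l\<in>UNIV. (c$k * d$l) *\<^sub>R (J (idx l) ** J (idx k)))"
    unfolding LL_mult[of d c] by (subst sum.swap) (simp add: mult.commute)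
  have "L c ** L d + L d ** L c = (\<Sum>k\<in>UNIV. \<Sum>l\<in>UNIV. (c$k * d$l) *\<^sub>R (J (idx k) ** J (idx l) + J (idx l) ** J (idx k)))"
    unfolding LL_mult[of c d] e2 by (simp add: sum.distrib[symmetric] scaleR_add_right)
  also have "\<dots> = (\<Sum>k\<in>UNIV. \<Sum>l\<in>UNIV. (c$k * d$l) *\<^sub>R (if k = l then (-2) *\<^sub>R mat 1 else 0))"
    by (intro sum.cong refl, subst anti_sum[OF idx17 idx17], simp add: idx_inj)
  also have "\<dots> = (\<Sum>k\<in>UNIV. (c$k * d$k) *\<^sub>R ((-2) *\<^sub>R mat 1))"
    by (simp add: if_distrib cong: if_cong)
  also have "\<dots> = (-2 * (c \<bullet> d)) *\<^sub>R mat 1"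
    by (simp add: inner_vec_def sum_negf scaleR_sum_left sum_distrib_left mult.commute)
  finally show ?thesis .
qed

lemma LL_sq: "L c ** L c = (- (c \<bullet> c)) *\<^sub>R mat 1"
proof -
  have "2 *\<^sub>R (L c ** L c) = L c ** L c + L c ** L c" by (rule scaleR_2)
  also have "\<dots> = (-2 * (c \<bullet> c)) *\<^sub>R mat 1" by (rule cliff)
  also have "\<dots> = 2 *\<^sub>R ((- (c \<bullet> c)) *\<^sub>R mat 1)" by simp
  finally have h: "2 *\<^sub>R (L c ** L c) = 2 *\<^sub>R ((- (c \<bullet> c)) *\<^sub>R mat 1)" .
  then show ?thesis by (metis scaleR_cancel_left zero_neq_numeral)
qed

lemma LL_tr: "transpose (L c) = - L c"
  unfolding LL_def
  by (simp add: tr_sum transpose_scalar sum_negf[symmetric]) (intro sum.cong refl, simp add: tr[OF idx17])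

lemma J_LL: "k \<in> {6,7} \<Longrightarrow> J k ** L c = - (L c ** J k)"
  unfolding LL_def
  apply (simp add: mm_lsum mm_rsum mm_lscale mm_rscale sum_negf[symmetric])
  apply (rule sum.cong, simp)
  subgoal for x
    using an[of k "idx x"] idx_range[of x] by auto
  done

end



context cl7 begin

lemma Jv_orth: "i \<in> {1..7} \<Longrightarrow> (J i *v x) \<bullet> (J i *v y) = x \<bullet> y"
  by (simp add: inner_mv tr matrix_vector_mul_assoc mm_lneg sq mv_neg del: transpose_matrix_vector)

lemma J_skew: "i \<in> {1..7} \<Longrightarrow> (J i *v x) \<bullet> x = 0"
proof -
  assume i: "i \<in> {1..7}"
  have "(J i *v x) \<bullet> x = x \<bullet> (- (J i *v x))" by (simp add: inner_mv tr[OF i] mv_neg del: transpose_matrix_vector)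
  then show ?thesis by (simp add: inner_commute)
qed

lemma J_pair: "i \<in> {1..7} \<Longrightarrow> j \<in> {1..7} \<Longrightarrow> i \<noteq> j \<Longrightarrow> (J i *v x) \<bullet> (J j *v x) = 0"
proof -
  assume i: "i \<in> {1..7}" and j: "j \<in> {1..7}" and ij: "i \<noteq> j"
  have 1: "(J i *v x) \<bullet> (J j *v x) = - (x \<bullet> ((J i ** J j) *v x))"
    by (simp add: inner_mv tr[OF i] mv_neg mm_lneg matrix_vector_mul_assoc del: transpose_matrix_vector)
  have 2: "(J j *v x) \<bullet> (J i *v x) = - (x \<bullet> ((J j ** J i) *v x))"
    by (simp add: inner_mv tr[OF j] mv_neg mm_lneg matrix_vector_mul_assoc del: transpose_matrix_vector)
  have 3: "J j ** J i = - (J i ** J j)" using an[OF i j ij] by simp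
  show ?thesis using 1 2 3 by (simp add: inner_commute mv_neg)
qed

lemma J_norm: "i \<in> {1..7} \<Longrightarrow> (J i *v x) \<bullet> (J i *v x) = x \<bullet> x"
  by (rule Jv_orth)

lemma L_vec: "L c *v x = (\<Sum>k\<in>UNIV. c$k *\<^sub>R (J (idx k) *v x))"
  unfolding LL_def by (simp add: mv_lsum mv_lscale)

lemma L_skew: "(L c *v x) \<bullet> x = 0"
proof -
  have "(L c *v x) \<bullet> x = x \<bullet> (- (L c *v x))" by (simp add: inner_mv LL_tr mv_neg del: transpose_matrix_vector)
  then show ?thesis by (simp add: inner_commute)
qed

lemma L_inner: "(L c *v x) \<bullet> (L d *v x) = (c \<bullet> d) * (x \<bullet> x)"
proof -
  have 1: "(L c *v x) \<bullet> (L d *v x) = - (x \<bullet> ((L c ** L d) *v x))"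
    by (simp add: inner_mv LL_tr mv_neg mm_lneg matrix_vector_mul_assoc del: transpose_matrix_vector)
  have 2: "(L d *v x) \<bullet> (L c *v x) = - (x \<bullet> ((L d ** L c) *v x))"
    by (simp add: inner_mv LL_tr mv_neg mm_lneg matrix_vector_mul_assoc del: transpose_matrix_vector)
  have 3: "(L c ** L d) *v x + (L d ** L c) *v x = (-2 * (c \<bullet> d)) *\<^sub>R x"
    using cliff[of c d] by (simp add: matrix_vector_mult_add_rdistrib[symmetric] mv_lscale mv_neg)
  have "x \<bullet> ((L c ** L d) *v x) + x \<bullet> ((L d ** L c) *v x) = (-2 * (c \<bullet> d)) * (x \<bullet> x)"
    using 3 by (metis inner_add_right inner_scaleR_right)
  then show ?thesis using 1 2 by (simp add: inner_commute)
qed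

lemma L_Jidx: "(L c *v x) \<bullet> (J (idx l) *v x) = c$l * (x \<bullet> x)"
proof -
  have "(L c *v x) \<bullet> (J (idx l) *v x) = (\<Sum>k\<in>UNIV. c$k * ((J (idx k) *v x) \<bullet> (J (idx l) *v x)))"
    by (simp add: L_vec inner_sum_left)
  also have "\<dots> = (\<Sum>k\<in>UNIV. c$k * (if k = l then x \<bullet> x else 0))"
    by (intro sum.cong refl) (auto simp: J_pair[OF idx17 idx17] idx_inj J_norm[OF idx17])
  finally show ?thesis by (simp add: if_distrib cong: if_cong)
qed

lemma L_J67: "k \<in> {6,7} \<Longrightarrow> (L c *v x) \<bullet> (J k *v x) = 0"
proof -
  assume k: "k \<in> {6,7}"
  have "(L c *v x) \<bullet> (J k *v x) = (\<Sum>l\<in>UNIV. c$l * ((J (idx l) *v x) \<bullet> (J k *v x)))"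
    by (simp add: L_vec inner_sum_left)
  also have "\<dots> = 0"
  proof (intro sum.neutral ballI)
    fix l :: 5
    have k7: "k \<in> {1..7}" using k by auto
    have "idx l \<noteq> k" using idx_range[of l] k by auto
    then show "c$l * ((J (idx l) *v x) \<bullet> (J k *v x)) = 0" using J_pair[OF idx17 k7] by simp
  qed
  finally show ?thesis .
qed

lemma L_lin: "z \<bullet> (L a *v x) = (\<Sum>k\<in>UNIV. a$k * (z \<bullet> (J (idx k) *v x)))"
  by (simp add: L_vec inner_sum_right)

lemma L_J7v: "J 7 *v (L c *v y) = - (L c *v (J 7 *v y))"
  by (simp add: matrix_vector_mul_assoc J_LL mv_neg)

lemma basis8:
  assumes x: "x \<noteq> 0" and wx: "w \<bullet> x = 0" and wJ: "\<And>i. i \<in> {1..7} \<Longrightarrow> w \<bullet> (J i *v x) = 0"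
  shows "w = 0"
proof (rule ccontr)
  assume w: "w \<noteq> 0"
  define f where "f i = (if i = 0 then w else if i = (8::nat) then x else J i *v x)" for i
  have fo: "f i \<bullet> f j = 0" if ij: "i \<in> {0..8}" "j \<in> {0..8}" "i \<noteq> j" for i j
  proof -
    consider "i = 0" | "i = 8" | "i \<in> {1..7}" using ij(1) by force
    then show ?thesis
    proof cases
      case 1
      then have "j = 8 \<or> j \<in> {1..7}" using ij by auto
      then show ?thesis using 1 by (auto simp: f_def wx wJ)
    next
      case 2
      then have "j = 0 \<or> j \<in> {1..7}" using ij by auto
      then show ?thesis
      proof
        assume "j = 0" then show ?thesis using 2 by (simp add: f_def wx inner_commute)
      next
        assume j: "j \<in> {1..7}" then have "j \<noteq> 0" "j \<noteq> 8" by auto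
        then show ?thesis using 2 J_skew[OF j, of x] by (simp add: f_def inner_commute)
      qed
    next
      case 3
      then have "j = 0 \<or> j = 8 \<or> (j \<in> {1..7} \<and> i \<noteq> j)" using ij by auto
      then show ?thesis using 3
      proof (elim disjE)
        assume "j = 0" then show ?thesis using 3 wJ[OF 3] by (simp add: f_def inner_commute)
      next
        assume "j = 8" then show ?thesis using 3 J_skew[OF 3] by (simp add: f_def)
      next
        assume jj: "j \<in> {1..7} \<and> i \<noteq> j"
        then have "j \<noteq> 0" "j \<noteq> 8" by auto
        then show ?thesis using 3 jj J_pair[OF 3, of j] by (simp add: f_def)
      qed
    qed
  qed
  have fn: "f i \<bullet> f i > 0" if ii: "i \<in> {0..8}" for i
  proof -
    consider "i = 0" | "i = 8" | "i \<in> {1..7}" using ii by force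
    then show ?thesis
    proof cases
      case 3
      then have "i \<noteq> 0" "i \<noteq> 8" by auto
      then show ?thesis using 3 J_norm[OF 3, of x] x by (simp add: f_def)
    qed (auto simp: f_def w x)
  qed
  have inj: "inj_on f {0..8}"
  proof (rule inj_onI, rule ccontr)
    fix i j assume i: "i \<in> {0..8}" and j: "j \<in> {0..8}" and e: "f i = f j" and ne: "i \<noteq> j"
    have "f i \<bullet> f j = 0" by (rule fo[OF i j ne])
    moreover have "f i \<bullet> f j > 0" using fn[OF i] e by simp
    moreover have "DIM(real^8) = 8" by simp
  moreover have "card {0..(8::nat)} = 9" by simp
  ultimately show False by linarith
  qed
  have "independent (f ` {0..8})"
  proof (rule pairwise_orthogonal_independent)
    show "pairwise orthogonal (f ` {0..8})"
    proof (rule pairwiseI)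
      fix u v assume u: "u \<in> f ` {0..8}" and v: "v \<in> f ` {0..8}" and uv: "u \<noteq> v"
      obtain i where i: "i \<in> {0..8}" "u = f i" using u by blast
      obtain j where j: "j \<in> {0..8}" "v = f j" using v by blast
      have "i \<noteq> j" using uv i j by blast
      then show "orthogonal u v" using fo[OF i(1) j(1)] i j by (simp add: orthogonal_def)
    qed
    show "0 \<notin> f ` {0..8}"
    proof
      assume "0 \<in> f ` {0..8}"
      then obtain i where i: "i \<in> {0..8}" and fi: "0 = f i" by (rule imageE)
      have "f i \<bullet> f i > 0" by (rule fn[OF i])
      then show False unfolding fi[symmetric] by simp
    qed
  qed
  then have "finite (f ` {0..8}) \<and> card (f ` {0..8}) \<le> DIM(real^8)" by (rule independent_bound)
  then have "card (f ` {0..8}) \<le> DIM(real^8)" by (rule conjunct2)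
  moreover have "card (f ` {0..8}) = card {0..(8::nat)}" by (rule card_image[OF inj])
  moreover have "DIM(real^8) = 8" by simp
  moreover have "card {0..(8::nat)} = 9" by simp
  ultimately show False by linarith
qed
end



context cl7 begin

lemma J7_inner: "(J 7 *v y) \<bullet> x = - (y \<bullet> (J 7 *v x))"
  by (simp add: inner_mv tr mv_neg del: transpose_matrix_vector)

lemma J7L_inner: "(J 7 *v (L c *v x)) \<bullet> z = (\<Sum>k\<in>UNIV. c$k * ((J 7 *v (J (idx k) *v x)) \<bullet> z))"
  by (simp add: L_vec mv_rsum matrix_vector_mult_scaleR inner_sum_left)

lemma exist_u:
  fixes a :: "real^5" and x :: "real^8"
  shows "\<exists>u1 u2. u1 \<bullet> u1 = 1 \<and> u2 \<bullet> u2 = 1 \<and> u1 \<bullet> a = 0 \<and> u2 \<bullet> a = 0 \<and>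
      L u2 *v x = J 7 *v (L u1 *v x)"
proof -
  define p :: "real^5" where "p = (\<chi> k. (J 7 *v (J (idx k) *v x)) \<bullet> (J 6 *v x))"
  define q :: "real^5" where "q = (\<chi> k. (J 7 *v (J (idx k) *v x)) \<bullet> (L a *v x))"
  have "dim {a, p, q} \<le> card {a, p, q}" by (rule dim_le_card') simp
  also have "\<dots> \<le> 3" by (simp add: card_insert_if)
  finally have dimlt: "dim {a, p, q} < DIM(real^5)" by simp
  then obtain c :: "real^5" where c0: "c \<noteq> 0" and co: "\<And>y. y \<in> span {a, p, q} \<Longrightarrow> orthogonal c y"
    using orthogonal_to_subspace_exists[OF dimlt] by blast
  define u1 where "u1 = (1 / norm c) *\<^sub>R c"
  have u1n: "u1 \<bullet> u1 = 1" using c0 by (simp add: u1_def dot_square_norm power2_eq_square)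
  have u1o: "u1 \<bullet> y = 0" if "y \<in> {a, p, q}" for y
    using co[of y] that by (simp add: u1_def span_base orthogonal_def)
  define Z where "Z = J 7 *v (L u1 *v x)"
  have Z6: "Z \<bullet> (J 6 *v x) = 0"
  proof -
    have "Z \<bullet> (J 6 *v x) = u1 \<bullet> p" unfolding Z_def J7L_inner by (simp add: p_def inner_vec_def)
    then show ?thesis using u1o by simp
  qed
  have Za: "Z \<bullet> (L a *v x) = 0"
  proof -
    have "Z \<bullet> (L a *v x) = u1 \<bullet> q" unfolding Z_def J7L_inner by (simp add: q_def inner_vec_def)
    then show ?thesis using u1o by simp
  qed
  show ?thesis
  proof (cases "x = 0")
    case True
    then show ?thesis using u1n u1o by auto
  next
    case False
    then have xx: "x \<bullet> x \<noteq> 0" by simp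
    define d :: "real^5" where "d = (\<chi> k. (Z \<bullet> (J (idx k) *v x)) / (x \<bullet> x))"
    have "Z - L d *v x = 0"
    proof (rule basis8[OF False])
      have "Z \<bullet> x = 0" unfolding Z_def J7_inner by (simp add: L_J67)
      then show "(Z - L d *v x) \<bullet> x = 0" by (simp add: inner_diff_left L_skew)
    next
      fix i :: nat assume i: "i \<in> {1..7}"
      then consider "i \<in> {1..5}" | "i = 6" | "i = 7" by force
      then show "(Z - L d *v x) \<bullet> (J i *v x) = 0"
      proof cases
        case 1
        then obtain k where k: "i = idx k" using idx_surj by blast
        show ?thesis unfolding k inner_diff_left L_Jidx using xx by (simp add: d_def)
      next
        case 2
        then show ?thesis using Z6 by (simp add: inner_diff_left L_J67)
      next
        case 3
        have "Z \<bullet> (J 7 *v x) = 0" unfolding Z_def by (simp add: Jv_orth L_skew)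
        then show ?thesis using 3 by (simp add: inner_diff_left L_J67)
      qed
    qed
    then have Zd: "L d *v x = Z" by simp
    have "(d \<bullet> d) * (x \<bullet> x) = Z \<bullet> Z" using L_inner[where c=d and d=d and x=x] Zd by simp
    also have "Z \<bullet> Z = (u1 \<bullet> u1) * (x \<bullet> x)" unfolding Z_def by (simp add: Jv_orth L_inner)
    finally have dn: "d \<bullet> d = 1" using xx u1n by simp
    have "d \<bullet> a = (\<Sum>k\<in>UNIV. d$k * a$k)" by (simp only: inner_vec_def inner_real_def)
    also have "\<dots> = (\<Sum>k\<in>UNIV. a$k * (Z \<bullet> (J (idx k) *v x))) / (x \<bullet> x)"
      by (simp add: d_def sum_divide_distrib mult.commute)
    also have "\<dots> = (Z \<bullet> (L a *v x)) / (x \<bullet> x)" by (simp only: L_lin)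
    finally have "d \<bullet> a = (Z \<bullet> (L a *v x)) / (x \<bullet> x)" .
    then have da: "d \<bullet> a = 0" using Za by simp
    show ?thesis using u1n u1o dn da Zd Z_def by blast
  qed
qed

end



definition rho :: "real^5 \<Rightarrow> real^5 \<Rightarrow> real^5" where
  "rho u c = (2 * (u \<bullet> c)) *\<^sub>R u - c"

lemma rho_inner: "u \<bullet> u = 1 \<Longrightarrow> rho u c \<bullet> rho u d = c \<bullet> d"
  by (simp add: rho_def inner_diff_left inner_diff_right inner_commute algebra_simps)

lemma rho_perp: "u \<bullet> a = 0 \<Longrightarrow> rho u a = - a"
  by (simp add: rho_def)

lemma rho_neg: "rho u (- a) = - rho u a"
  by (simp add: rho_def)

lemma orth_inv: "orthogonal_matrix (N::real^'n^'n) \<Longrightarrow> N ** matrix_inv N = mat 1 \<and> matrix_inv N ** N = mat 1"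
  unfolding matrix_inv_def orthogonal_matrix_def by (rule someI[of _ "transpose N"]) simp

context cl7 begin

lemma LL_rho: "u \<bullet> u = 1 \<Longrightarrow> L u ** L c = L (rho u c) ** L u"
proof -
  assume u: "u \<bullet> u = 1"
  have c1: "L u ** L c = (-2 * (u \<bullet> c)) *\<^sub>R mat 1 - L c ** L u"
    using cliff[of u c] by (simp add: eq_diff_eq)
  have "L (rho u c) ** L u = (2 * (u \<bullet> c)) *\<^sub>R (L u ** L u) - L c ** L u"
    by (simp add: rho_def LL_diff LL_scale mm_lsub mm_lscale)
  also have "\<dots> = (-2 * (u \<bullet> c)) *\<^sub>R mat 1 - L c ** L u"
    by (simp add: LL_sq u)
  finally show ?thesis using c1 by simp
qed

lemma L_J6: "L c ** J 6 = - (J 6 ** L c)" using J_LL[of 6 c] by simp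
lemma L_J7: "L c ** J 7 = - (J 7 ** L c)" using J_LL[of 7 c] by simp

lemma L_J67m: "L c ** (J 6 ** J 7) = (J 6 ** J 7) ** L c"
proof -
  have "L c ** (J 6 ** J 7) = (L c ** J 6) ** J 7" by (simp add: matrix_mul_assoc)
  also have "\<dots> = - (J 6 ** (L c ** J 7))" by (simp add: L_J6 mm_lneg matrix_mul_assoc)
  also have "\<dots> = (J 6 ** J 7) ** L c" by (simp add: L_J7 mm_rneg matrix_mul_assoc)
  finally show ?thesis .
qed

lemma J76: "J 7 ** J 6 = - (J 6 ** J 7)" using an[of 7 6] by simp
lemma J77: "J 7 ** J 7 = - mat 1" using sq[of 7] by simp

lemma J7_J67: "J 7 ** (J 6 ** J 7) = - ((J 6 ** J 7) ** J 7)"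
proof -
  have "J 7 ** (J 6 ** J 7) = (J 7 ** J 6) ** J 7" by (simp add: matrix_mul_assoc)
  also have "\<dots> = - ((J 6 ** J 7) ** J 7)" by (simp add: J76 mm_lneg)
  finally show ?thesis .
qed

lemma orth_L: "u \<bullet> u = 1 \<Longrightarrow> orthogonal_matrix (L u)"
  unfolding orthogonal_matrix by (simp add: LL_tr mm_lneg LL_sq)

lemma orth_J7: "orthogonal_matrix (J 7)"
  unfolding orthogonal_matrix by (simp add: tr mm_lneg J77)

definition sig :: "real^5 \<Rightarrow> real^5 \<Rightarrow> real^5 \<Rightarrow> real^5" where
  "sig u1 u2 k = - rho u1 (rho u2 k)"

lemma N_L:
  assumes u1: "u1 \<bullet> u1 = 1" and u2: "u2 \<bullet> u2 = 1"
  shows "(J 7 ** L u1 ** L u2) ** L k = L (sig u1 u2 k) ** (J 7 ** L u1 ** L u2)"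
proof -
  have "(J 7 ** L u1 ** L u2) ** L k = J 7 ** (L u1 ** (L u2 ** L k))" by (simp add: matrix_mul_assoc)
  also have "\<dots> = J 7 ** (L u1 ** (L (rho u2 k) ** L u2))" by (simp only: LL_rho[OF u2, of k])
  also have "\<dots> = J 7 ** ((L u1 ** L (rho u2 k)) ** L u2)" by (simp only: matrix_mul_assoc)
  also have "\<dots> = J 7 ** ((L (rho u1 (rho u2 k)) ** L u1) ** L u2)" by (simp only: LL_rho[OF u1, of "rho u2 k"])
  also have "\<dots> = (J 7 ** L (rho u1 (rho u2 k))) ** (L u1 ** L u2)" by (simp only: matrix_mul_assoc)
  also have "\<dots> = (- (L (rho u1 (rho u2 k)) ** J 7)) ** (L u1 ** L u2)" by (simp only: J_LL[of 7] insert_iff simp_thms)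
  also have "\<dots> = L (sig u1 u2 k) ** (J 7 ** L u1 ** L u2)"
    by (simp add: sig_def LL_neg mm_lneg matrix_mul_assoc)
  finally show ?thesis .
qed

lemma N_J6: "(J 7 ** L u1 ** L u2) ** J 6 = - (J 6 ** (J 7 ** L u1 ** L u2))"
proof -
  have "(J 7 ** L u1 ** L u2) ** J 6 = J 7 ** (L u1 ** (L u2 ** J 6))" by (simp add: matrix_mul_assoc)
  also have "\<dots> = J 7 ** (L u1 ** (- (J 6 ** L u2)))" by (simp only: L_J6)
  also have "\<dots> = - (J 7 ** ((L u1 ** J 6) ** L u2))" by (simp only: mm_rneg matrix_mul_assoc)
  also have "\<dots> = - (J 7 ** ((- (J 6 ** L u1)) ** L u2))" by (simp only: L_J6)
  also have "\<dots> = (J 7 ** J 6) ** L u1 ** L u2" by (simp only: mm_rneg mm_lneg matrix_mul_assoc minus_minus)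
  also have "\<dots> = - (J 6 ** (J 7 ** L u1 ** L u2))"
    by (simp add: J76 mm_lneg matrix_mul_assoc)
  finally show ?thesis .
qed

lemma N_J67: "(J 7 ** L u1 ** L u2) ** (J 6 ** J 7) = - ((J 6 ** J 7) ** (J 7 ** L u1 ** L u2))"
proof -
  have "(J 7 ** L u1 ** L u2) ** (J 6 ** J 7) = J 7 ** (L u1 ** (L u2 ** (J 6 ** J 7)))" by (simp add: matrix_mul_assoc)
  also have "\<dots> = J 7 ** (L u1 ** ((J 6 ** J 7) ** L u2))" by (simp only: L_J67m)
  also have "\<dots> = J 7 ** ((L u1 ** (J 6 ** J 7)) ** L u2)" by (simp only: matrix_mul_assoc)
  also have "\<dots> = J 7 ** (((J 6 ** J 7) ** L u1) ** L u2)" by (simp only: L_J67m)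
  also have "\<dots> = (J 7 ** (J 6 ** J 7)) ** L u1 ** L u2" by (simp only: matrix_mul_assoc)
  also have "\<dots> = (- ((J 6 ** J 7) ** J 7)) ** L u1 ** L u2" by (simp only: J7_J67)
  also have "\<dots> = - ((J 6 ** J 7) ** (J 7 ** L u1 ** L u2))"
    by (simp only: mm_lneg matrix_mul_assoc)
  finally show ?thesis .
qed

lemma N_vec:
  assumes u1: "u1 \<bullet> u1 = 1" and e: "L u2 *v x = J 7 *v (L u1 *v x)"
  shows "(J 7 ** L u1 ** L u2) *v x = - x"
proof -
  have "(J 7 ** L u1 ** L u2) *v x = J 7 *v (L u1 *v (J 7 *v (L u1 *v x)))"
    by (simp add: matrix_vector_mul_assoc[symmetric] e)
  also have "\<dots> = - (J 7 *v (J 7 *v (L u1 *v (L u1 *v x))))"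
  proof -
    have h: "L u1 *v (J 7 *v y) = - (J 7 *v (L u1 *v y))" for y using L_J7v[of u1 y] by simp
    show ?thesis by (simp add: h mv_rneg)
  qed
  also have "\<dots> = - x"
    by (simp add: matrix_vector_mul_assoc J77 LL_sq u1 mv_neg mv_lscale)
  finally show ?thesis .
qed

lemma tr_id8: "trace (mat 1 :: mat8) = 8" by (simp add: trace_I)

lemma trace_LL: "trace (L c ** L d) = -8 * (c \<bullet> d)"
proof -
  have "trace (L c ** L d) + trace (L d ** L c) = trace ((-2 * (c \<bullet> d)) *\<^sub>R mat 1 :: mat8)"
    by (simp only: cliff trace_add[symmetric])
  also have "\<dots> = (-2 * (c \<bullet> d)) * 8" by (simp only: trace_scale tr_id8)
  finally show ?thesis using trace_mul_sym[of "L c" "L d"] by simp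
qed

end



lemma span_ins: "x \<in> span (insert a S) \<Longrightarrow> \<exists>k. x - k *\<^sub>R a \<in> span S"
  by (simp add: span_insert)

context cl7 begin

abbreviation "V \<equiv> span {J 1, J 2, J 3, J 4, J 5, J 6, J 6 ** J 7}"
abbreviation "V5 \<equiv> span {J 1, J 2, J 3, J 4, J 5}"
abbreviation "V2 \<equiv> span {J 6, J 6 ** J 7}"

definition vec5 :: "real \<Rightarrow> real \<Rightarrow> real \<Rightarrow> real \<Rightarrow> real \<Rightarrow> real^5" where
  "vec5 a b c d e = (\<chi> i. if i = 1 then a else if i = 2 then b else if i = 3 then c else if i = 4 then d else e)"

lemma vec5_nth: "vec5 a b c d e $ 1 = a" "vec5 a b c d e $ 2 = b" "vec5 a b c d e $ 3 = c"
  "vec5 a b c d e $ 4 = d" "vec5 a b c d e $ 5 = e"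
  using distinct5 by (auto simp: vec5_def)

lemma V_decomp:
  assumes "K \<in> V"
  shows "\<exists>c b6 b7. K = L c + (b6 *\<^sub>R J 6 + b7 *\<^sub>R (J 6 ** J 7))"
proof -
  from span_ins[OF assms] obtain k1 where "K - k1 *\<^sub>R J 1 \<in> span {J 2, J 3, J 4, J 5, J 6, J 6 ** J 7}" by blast
  from span_ins[OF this] obtain k2 where "K - k1 *\<^sub>R J 1 - k2 *\<^sub>R J 2 \<in> span {J 3, J 4, J 5, J 6, J 6 ** J 7}" by blast
  from span_ins[OF this] obtain k3 where "K - k1 *\<^sub>R J 1 - k2 *\<^sub>R J 2 - k3 *\<^sub>R J 3 \<in> span {J 4, J 5, J 6, J 6 ** J 7}" by blast
  from span_ins[OF this] obtain k4 where "K - k1 *\<^sub>R J 1 - k2 *\<^sub>R J 2 - k3 *\<^sub>R J 3 - k4 *\<^sub>R J 4 \<in> span {J 5, J 6, J 6 ** J 7}" by blast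
  from span_ins[OF this] obtain k5 where "K - k1 *\<^sub>R J 1 - k2 *\<^sub>R J 2 - k3 *\<^sub>R J 3 - k4 *\<^sub>R J 4 - k5 *\<^sub>R J 5 \<in> span {J 6, J 6 ** J 7}" by blast
  from span_ins[OF this] obtain k6 where "K - k1 *\<^sub>R J 1 - k2 *\<^sub>R J 2 - k3 *\<^sub>R J 3 - k4 *\<^sub>R J 4 - k5 *\<^sub>R J 5 - k6 *\<^sub>R J 6 \<in> span {J 6 ** J 7}" by blast
  from span_ins[OF this] obtain k7 where "K - k1 *\<^sub>R J 1 - k2 *\<^sub>R J 2 - k3 *\<^sub>R J 3 - k4 *\<^sub>R J 4 - k5 *\<^sub>R J 5 - k6 *\<^sub>R J 6 - k7 *\<^sub>R (J 6 ** J 7) \<in> span {}" by blast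
  then have "K = L (vec5 k1 k2 k3 k4 k5) + (k6 *\<^sub>R J 6 + k7 *\<^sub>R (J 6 ** J 7))"
    by (simp add: LL_expand vec5_nth algebra_simps)
  then show ?thesis by blast
qed

lemma V5_decomp:
  assumes "K \<in> V5"
  shows "\<exists>c. K = L c"
proof -
  from span_ins[OF assms] obtain k1 where "K - k1 *\<^sub>R J 1 \<in> span {J 2, J 3, J 4, J 5}" by blast
  from span_ins[OF this] obtain k2 where "K - k1 *\<^sub>R J 1 - k2 *\<^sub>R J 2 \<in> span {J 3, J 4, J 5}" by blast
  from span_ins[OF this] obtain k3 where "K - k1 *\<^sub>R J 1 - k2 *\<^sub>R J 2 - k3 *\<^sub>R J 3 \<in> span {J 4, J 5}" by blast
  from span_ins[OF this] obtain k4 where "K - k1 *\<^sub>R J 1 - k2 *\<^sub>R J 2 - k3 *\<^sub>R J 3 - k4 *\<^sub>R J 4 \<in> span {J 5}" by blast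
  from span_ins[OF this] obtain k5 where "K - k1 *\<^sub>R J 1 - k2 *\<^sub>R J 2 - k3 *\<^sub>R J 3 - k4 *\<^sub>R J 4 - k5 *\<^sub>R J 5 \<in> span {}" by blast
  then have "K = L (vec5 k1 k2 k3 k4 k5)"
    by (simp add: LL_expand vec5_nth algebra_simps)
  then show ?thesis by blast
qed

lemma L_in_V5: "L c \<in> V5"
  unfolding LL_expand by (intro span_add span_scale span_base) auto

lemma B_in_V2: "b6 *\<^sub>R J 6 + b7 *\<^sub>R (J 6 ** J 7) \<in> V2"
  by (intro span_add span_scale span_base) auto

lemma V5_V: "V5 \<subseteq> V" by (rule span_mono) auto
lemma V2_V: "V2 \<subseteq> V" by (rule span_mono) auto

lemma in_V: "L c + (b6 *\<^sub>R J 6 + b7 *\<^sub>R (J 6 ** J 7)) \<in> V"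
  using L_in_V5 B_in_V2 V5_V V2_V by (meson span_add subsetD)

end



context cl7 begin

lemma sig_inner: "u1 \<bullet> u1 = 1 \<Longrightarrow> u2 \<bullet> u2 = 1 \<Longrightarrow> sig u1 u2 c \<bullet> sig u1 u2 d = c \<bullet> d"
  by (simp add: sig_def rho_inner)

lemma sig_perp: "u1 \<bullet> a = 0 \<Longrightarrow> u2 \<bullet> a = 0 \<Longrightarrow> sig u1 u2 a = - a"
  by (simp add: sig_def rho_perp rho_neg)

lemma conjN:
  assumes u1: "u1 \<bullet> u1 = 1" and u2: "u2 \<bullet> u2 = 1"
  shows "(J 7 ** L u1 ** L u2) ** (L c + (b6 *\<^sub>R J 6 + b7 *\<^sub>R (J 6 ** J 7)))
       = (L (sig u1 u2 c) + ((- b6) *\<^sub>R J 6 + (- b7) *\<^sub>R (J 6 ** J 7))) ** (J 7 ** L u1 ** L u2)"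
  by (simp add: matrix_add_ldistrib mm_rscale N_L[OF u1 u2] N_J6 N_J67 mm_ladd mm_lscale mm_lsub mm_lneg)

lemma ip_facts:
  assumes ip: "inner_product_on V ip"
  shows ip_add: "x \<in> V \<Longrightarrow> y \<in> V \<Longrightarrow> z \<in> V \<Longrightarrow> ip (x + y) z = ip x z + ip y z"
    and ip_neg: "x \<in> V \<Longrightarrow> z \<in> V \<Longrightarrow> ip (- x) z = - ip x z"
    and ip_sym: "x \<in> V \<Longrightarrow> z \<in> V \<Longrightarrow> ip x z = ip z x"
proof -
  have bil: "\<And>x y z a b. x \<in> V \<Longrightarrow> y \<in> V \<Longrightarrow> z \<in> V \<Longrightarrow> ip (a *\<^sub>R x + b *\<^sub>R y) z = a * ip x z + b * ip y z"
    using ip unfolding inner_product_on_def by blast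
  show "x \<in> V \<Longrightarrow> y \<in> V \<Longrightarrow> z \<in> V \<Longrightarrow> ip (x + y) z = ip x z + ip y z"
    using bil[of x y z 1 1] by simp
  show "x \<in> V \<Longrightarrow> z \<in> V \<Longrightarrow> ip (- x) z = - ip x z"
    using bil[of x x z "-1" 0] by simp
  show "x \<in> V \<Longrightarrow> z \<in> V \<Longrightarrow> ip x z = ip z x"
    using ip unfolding inner_product_on_def by blast
qed

lemma ip_split:
  assumes ip: "inner_product_on V ip"
    and perp: "\<forall>A\<in>V5. \<forall>B\<in>V2. ip A B = 0"
    and B: "B \<in> V2" and B': "B' \<in> V2"
  shows "ip (L c + B) (L c' + B') = ip (L c) (L c') + ip B B'"
proof -
  have Lc: "L c \<in> V" and Lc': "L c' \<in> V" using L_in_V5 V5_V by auto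
  have BV: "B \<in> V" and BV': "B' \<in> V" using B B' V2_V by auto
  have Z: "L c' + B' \<in> V" using Lc' BV' by (rule span_add)
  have "ip (L c + B) (L c' + B') = ip (L c) (L c' + B') + ip B (L c' + B')"
    by (rule ip_add[OF ip Lc BV Z])
  also have "ip (L c) (L c' + B') = ip (L c' + B') (L c)" by (rule ip_sym[OF ip Lc Z])
  also have "\<dots> = ip (L c') (L c) + ip B' (L c)" by (rule ip_add[OF ip Lc' BV' Lc])
  also have "ip B' (L c) = 0" using perp L_in_V5 B' ip_sym[OF ip BV' Lc] by simp
  also have "ip (L c') (L c) = ip (L c) (L c')" by (rule ip_sym[OF ip Lc' Lc])
  also have "ip B (L c' + B') = ip (L c' + B') B" by (rule ip_sym[OF ip BV Z])
  also have "\<dots> = ip (L c') B + ip B' B" by (rule ip_add[OF ip Lc' BV' BV])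
  also have "ip (L c') B = 0" using perp L_in_V5 B by simp
  also have "ip B' B = ip B B'" by (rule ip_sym[OF ip BV' BV])
  finally show ?thesis by simp
qed

lemma WS_main:
  assumes ip: "inner_product_on V ip"
    and std: "standard_on V5 ip"
    and perp: "\<forall>A\<in>V5. \<forall>B\<in>V2. ip A B = 0"
  shows "WS_pair V ip"
  unfolding WS_pair_def
proof (intro ballI allI)
  fix J0 X assume J0: "J0 \<in> V"
  obtain a b6 b7 where J0e: "J0 = L a + (b6 *\<^sub>R J 6 + b7 *\<^sub>R (J 6 ** J 7))"
    using V_decomp[OF J0] by blast
  obtain u1 u2 where u1: "u1 \<bullet> u1 = 1" and u2: "u2 \<bullet> u2 = 1" and u1a: "u1 \<bullet> a = 0"
    and u2a: "u2 \<bullet> a = 0" and e: "L u2 *v X = J 7 *v (L u1 *v X)"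
    using exist_u[of a X] by blast
  define N where "N = J 7 ** L u1 ** L u2"
  have oN: "orthogonal_matrix N"
    unfolding N_def by (intro orthogonal_matrix_mul orth_J7 orth_L u1 u2)
  have Ninv: "N ** matrix_inv N = mat 1" using orth_inv[OF oN] by blast
  obtain cst where cst: "cst > 0" and stdc: "\<And>J K. J \<in> V5 \<Longrightarrow> K \<in> V5 \<Longrightarrow> ip J K = cst * (- trace (J ** K))"
    using std unfolding standard_on_def by blast
  have ipL: "ip (L c) (L d) = cst * (8 * (c \<bullet> d))" for c d
    using stdc[OF L_in_V5 L_in_V5] trace_LL by simp
  have conj: "N ** (L c + (b6 *\<^sub>R J 6 + b7 *\<^sub>R (J 6 ** J 7))) ** matrix_inv N
      = L (sig u1 u2 c) + ((- b6) *\<^sub>R J 6 + (- b7) *\<^sub>R (J 6 ** J 7))" for c b6 b7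
  proof -
    have "N ** (L c + (b6 *\<^sub>R J 6 + b7 *\<^sub>R (J 6 ** J 7))) ** matrix_inv N
       = (L (sig u1 u2 c) + ((- b6) *\<^sub>R J 6 + (- b7) *\<^sub>R (J 6 ** J 7))) ** (N ** matrix_inv N)"
      unfolding N_def conjN[OF u1 u2] by (simp only: matrix_mul_assoc)
    then show ?thesis using Ninv by simp
  qed
  have "N \<in> normalizer V ip"
    unfolding normalizer_def
  proof (intro CollectI conjI ballI oN)
    fix K assume K: "K \<in> V"
    obtain c b6 b7 where Ke: "K = L c + (b6 *\<^sub>R J 6 + b7 *\<^sub>R (J 6 ** J 7))"
      using V_decomp[OF K] by blast
    show "N ** K ** matrix_inv N \<in> V" unfolding Ke conj by (rule in_V)
  next
    fix K K' assume K: "K \<in> V" and K': "K' \<in> V"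
    obtain c b6 b7 where Ke: "K = L c + (b6 *\<^sub>R J 6 + b7 *\<^sub>R (J 6 ** J 7))"
      using V_decomp[OF K] by blast
    obtain c' b6' b7' where Ke': "K' = L c' + (b6' *\<^sub>R J 6 + b7' *\<^sub>R (J 6 ** J 7))"
      using V_decomp[OF K'] by blast
    let ?B = "b6 *\<^sub>R J 6 + b7 *\<^sub>R (J 6 ** J 7)"
    let ?B' = "b6' *\<^sub>R J 6 + b7' *\<^sub>R (J 6 ** J 7)"
    have nB: "(- b6) *\<^sub>R J 6 + (- b7) *\<^sub>R (J 6 ** J 7) = - ?B" by simp
    have nB': "(- b6') *\<^sub>R J 6 + (- b7') *\<^sub>R (J 6 ** J 7) = - ?B'" by simp
    have BV: "?B \<in> V" and BV': "?B' \<in> V" using B_in_V2 V2_V by auto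
    have mB: "- ?B \<in> V2" "- ?B' \<in> V2" by (rule span_neg[OF B_in_V2])+
    have "ip (N ** K ** matrix_inv N) (N ** K' ** matrix_inv N)
        = ip (L (sig u1 u2 c) + - ?B) (L (sig u1 u2 c') + - ?B')"
      unfolding Ke Ke' conj nB nB' ..
    also have "\<dots> = ip (L (sig u1 u2 c)) (L (sig u1 u2 c')) + ip (- ?B) (- ?B')"
      by (rule ip_split[OF ip perp mB])
    also have "ip (- ?B) (- ?B') = ip ?B ?B'"
    proof -
      have m': "- ?B' \<in> V" using BV' by (rule span_neg)
      have "ip (- ?B) (- ?B') = - ip ?B (- ?B')" by (rule ip_neg[OF ip BV m'])
      also have "ip ?B (- ?B') = ip (- ?B') ?B" by (rule ip_sym[OF ip BV m'])
      also have "\<dots> = - ip ?B' ?B" by (rule ip_neg[OF ip BV' BV])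
      also have "ip ?B' ?B = ip ?B ?B'" by (rule ip_sym[OF ip BV' BV])
      finally show ?thesis by simp
    qed
    also have "ip (L (sig u1 u2 c)) (L (sig u1 u2 c')) = ip (L c) (L c')"
      by (simp add: ipL sig_inner u1 u2)
    also have "ip (L c) (L c') + ip ?B ?B' = ip K K'"
      unfolding Ke Ke' by (rule ip_split[OF ip perp B_in_V2 B_in_V2, symmetric])
    finally show "ip (N ** K ** matrix_inv N) (N ** K' ** matrix_inv N) = ip K K'" .
  qed
  moreover have "N *v X = - X" unfolding N_def by (rule N_vec[OF u1 e])
  moreover have "N ** J0 = - (J0 ** N)"
  proof -
    have "N ** J0 = (L (sig u1 u2 a) + ((- b6) *\<^sub>R J 6 + (- b7) *\<^sub>R (J 6 ** J 7))) ** N"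
      unfolding N_def J0e by (rule conjN[OF u1 u2])
    also have "\<dots> = - (J0 ** N)" by (simp add: sig_perp[OF u1a u2a] LL_neg J0e mm_lneg[symmetric])
    finally show ?thesis .
  qed
  ultimately show "\<exists>N\<in>normalizer V ip. N *v X = - X \<and> N ** J0 = - (J0 ** N)" by blast
qed

end



context cl7 begin

lemma J67_comm: "i \<in> {1..5} \<Longrightarrow> (J 6 ** J 7) ** J i = J i ** (J 6 ** J 7)"
proof -
  assume i: "i \<in> {1..5}"
  have i7: "i \<in> {1..7}" using i by auto
  have a7: "J 7 ** J i = - (J i ** J 7)" using an[of 7 i] i by auto
  have a6: "J 6 ** J i = - (J i ** J 6)" using an[of 6 i] i by auto
  have "(J 6 ** J 7) ** J i = J 6 ** (J 7 ** J i)" by (simp add: matrix_mul_assoc)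
  also have "\<dots> = - ((J 6 ** J i) ** J 7)" by (simp add: a7 mm_rneg matrix_mul_assoc)
  also have "\<dots> = J i ** (J 6 ** J 7)" by (simp add: a6 mm_lneg matrix_mul_assoc)
  finally show ?thesis .
qed

lemma mat1_nz: "(mat 1 :: mat8) \<noteq> 0"
proof
  assume "(mat 1 :: mat8) = 0"
  then have "(mat 1 :: mat8) $ 1 $ 1 = 0" by simp
  then show False by (simp add: mat_def)
qed

lemma J67_ne: "J 6 ** J 7 \<noteq> s *\<^sub>R J 1" if s: "s \<noteq> 0"
proof
  assume h: "J 6 ** J 7 = s *\<^sub>R J 1"
  have c: "(J 6 ** J 7) ** J 2 = J 2 ** (J 6 ** J 7)" using J67_comm[of 2] by simp
  have a: "J 2 ** J 1 = - (J 1 ** J 2)" using an[of 2 1] by auto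
  have "s *\<^sub>R (J 1 ** J 2) = s *\<^sub>R (J 2 ** J 1)" using c unfolding h by (simp add: mm_lscale mm_rscale)
  then have "J 1 ** J 2 = J 2 ** J 1" using s by simp
  then have e: "J 1 ** J 2 = - (J 1 ** J 2)" using a by simp
  have "(2::real) *\<^sub>R (J 1 ** J 2) = J 1 ** J 2 + J 1 ** J 2" by (rule scaleR_2)
  also have "\<dots> = 0" by (subst (2) e) simp
  finally have "J 1 ** J 2 = 0" by simp
  then have "J 1 ** (J 1 ** J 2) = 0" by simp
  then have "J 2 = 0" by (simp add: matrix_mul_assoc sq mm_lneg)
  then have "J 2 ** J 2 = 0" by simp
  then show False using sq[of 2] mat1_nz by simp
qed

lemma not_nonsing: "\<not> nonsingular V"
proof
  assume ns: "nonsingular V"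
  define K0 where "K0 = J 1 + J 6 ** J 7"
  define K1 where "K1 = J 1 - J 6 ** J 7"
  have K0V: "K0 \<in> V" unfolding K0_def by (intro span_add span_base) auto
  have K0nz: "K0 \<noteq> 0"
  proof
    assume "K0 = 0"
    then have "J 6 ** J 7 = (-1) *\<^sub>R J 1" unfolding K0_def by (simp add: add_eq_0_iff)
    then show False using J67_ne[of "-1"] by simp
  qed
  have K1nz: "K1 \<noteq> 0"
  proof
    assume "K1 = 0"
    then have "J 6 ** J 7 = 1 *\<^sub>R J 1" unfolding K1_def by simp
    then show False using J67_ne[of 1] by simp
  qed
  have c1: "(J 6 ** J 7) ** J 1 = J 1 ** (J 6 ** J 7)" by (rule J67_comm) (simp only: atLeastAtMost_iff order_refl one_le_numeral)
  have sq67: "(J 6 ** J 7) ** (J 6 ** J 7) = - mat 1"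
  proof -
    have "(J 6 ** J 7) ** (J 6 ** J 7) = J 6 ** ((J 7 ** J 6) ** J 7)" by (simp add: matrix_mul_assoc)
    also have "\<dots> = - (J 6 ** J 6 ** (J 7 ** J 7))" by (simp add: J76 mm_lneg mm_rneg matrix_mul_assoc)
    also have "\<dots> = - mat 1" by (simp add: sq mm_lneg mm_rneg)
    finally show ?thesis .
  qed
  have sq1: "J 1 ** J 1 = - mat 1" by (rule sq) simp
  have "K0 ** K1 = J 1 ** J 1 - J 1 ** (J 6 ** J 7) + ((J 6 ** J 7) ** J 1 - (J 6 ** J 7) ** (J 6 ** J 7))"
    unfolding K0_def K1_def by (simp only: mm_ladd mm_rsub) (simp add: algebra_simps)
  also have "\<dots> = - mat 1 - J 1 ** (J 6 ** J 7) + (J 1 ** (J 6 ** J 7) - - mat 1)"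
    by (simp only: c1 sq67 sq1)
  also have "\<dots> = 0" by simp
  finally have "K0 ** K1 = 0" .
  have "invertible K0" using ns K0V K0nz unfolding nonsingular_def by blast
  then obtain A where A: "A ** K0 = mat 1" unfolding invertible_def by blast
  have "K1 = (A ** K0) ** K1" using A by simp
  also have "\<dots> = A ** (K0 ** K1)" by (simp only: matrix_mul_assoc)
  also have "\<dots> = 0" using \<open>K0 ** K1 = 0\<close> by simp
  finally show False using K1nz by simp
qed

end

theorem mainTheorem12:
  fixes J :: "nat \<Rightarrow> mat8" and ip :: "mat8 \<Rightarrow> mat8 \<Rightarrow> real"
  assumes ocs: "\<forall>i\<in>{1..7}. ocs (J i)"
    and anti: "\<forall>i\<in>{1..7}. \<forall>j\<in>{1..7}. i \<noteq> j \<longrightarrow> J i ** J j = - (J j ** J i)"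
    and ip: "inner_product_on (span {J 1, J 2, J 3, J 4, J 5, J 6, J 6 ** J 7}) ip"
    and std: "standard_on (span {J 1, J 2, J 3, J 4, J 5}) ip"
    and perp: "\<forall>A\<in>span {J 1, J 2, J 3, J 4, J 5}. \<forall>B\<in>span {J 6, J 6 ** J 7}. ip A B = 0"
  shows "WS_pair (span {J 1, J 2, J 3, J 4, J 5, J 6, J 6 ** J 7}) ip
         \<and> \<not> nonsingular (span {J 1, J 2, J 3, J 4, J 5, J 6, J 6 ** J 7})"
proof -
  interpret cl7 J
  proof
    fix i :: nat assume i: "i \<in> {1..7}"
    have o: "orthogonal_matrix (J i)" and s: "J i ** J i = - mat 1"
      using ocs i unfolding ocs_def by auto
    show "J i ** J i = - mat 1" by (rule s)
    have "transpose (J i) = transpose (J i) ** (J i ** (- J i))"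
      by (simp add: mm_rneg s)
    also have "\<dots> = (transpose (J i) ** J i) ** (- J i)" by (simp add: matrix_mul_assoc)
    also have "\<dots> = - J i" using o unfolding orthogonal_matrix_def by simp
    finally show "transpose (J i) = - J i" .
  next
    fix i j :: nat assume "i \<in> {1..7}" "j \<in> {1..7}" "i \<noteq> j"
    then show "J i ** J j = - (J j ** J i)" using anti by blast
  qed
  show ?thesis using WS_main[OF ip std perp] not_nonsing by blast
qed


end
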